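(* Let $a,y\in\mathbb{R}$ and define $$\mathcal{K}(a;x,y,z)=2\exp(2xyz)\,\mathrm{Ai}\big(x^2+y^2+z^2+a/4\big).$$ For each $n=0,1,2,\ldots$ and $\rho\in(0,1)$ there exists a constant $C=C_n(\rho,a,y)>0$ such that $$\Big|\frac{\partial^n\mathcal{K}(a;x,y,z)}{\partial x^n}\Big|<C\exp\Big(-\frac{2\rho}{3}(x^2+z^2)^{3/2}\Big)$$ for all $x,z\in\mathbb{R}$.
   Context: $\mathrm{Ai}$ is the standard Airy function, $\mathrm{Ai}(x)=\frac{1}{2\pi i}\int_{\infty e^{-i\pi/3}}^{\infty e^{i\pi/3}}\exp(\zeta^3/3-\zeta x)\,d\zeta$, the solution of $w''=xw$ decaying as $x\to+\infty$. *)

theory Defs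
  imports "HOL-Analysis.Analysis"
begin

text \<open>Airy function via its contour integral
  Ai(x) = 1/(2 pi i) int exp(zeta^3/3 - zeta x) d zeta, taken along the contour
  from infinity e^(-i pi/3) to 0 to infinity e^(i pi/3), parametrised by
  zeta = r e^(+-i pi/3), r >= 0 (on these rays zeta^3 = -r^3).\<close>

definition Airy_integrand :: "real \<Rightarrow> real \<Rightarrow> complex" where
  "Airy_integrand x r =
     (let w = cis (pi/3); v = cis (-(pi/3)) in
        w * exp ((of_real r * w) ^ 3 / 3 - of_real r * w * of_real x)
      - v * exp ((of_real r * v) ^ 3 / 3 - of_real r * v * of_real x))"

definition Ai :: "real \<Rightarrow> real" where
  "Ai x = Re (integral {0..} (Airy_integrand x) / (2 * pi * \<i>))"

definition Kker :: "real \<Rightarrow> real \<Rightarrow> real \<Rightarrow> real \<Rightarrow> real" where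
  "Kker a x y z = 2 * exp (2 * x * y * z) * Ai (x^2 + y^2 + z^2 + a / 4)"

end

theory Submission
  imports Defs "HOL-Complex_Analysis.Complex_Analysis"
begin


definition ww :: complex where "ww = cis (pi/3)"
definition vv :: complex where "vv = cis (-(pi/3))"
definition phz :: "complex \<Rightarrow> complex \<Rightarrow> complex" where "phz s y = y^3/3 - y * s"
definition gg :: "complex \<Rightarrow> real \<Rightarrow> complex" where
  "gg s r = ww * exp (phz s (of_real r * ww)) - vv * exp (phz s (of_real r * vv))"
definition Fc :: "complex \<Rightarrow> complex" where "Fc s = integral {0..} (gg s)"

lemma Airy_eq: "Airy_integrand x = gg (of_real x)"
  by (auto simp: Airy_integrand_def gg_def phz_def ww_def vv_def Let_def fun_eq_iff)

lemma ww3: "ww^3 = -1"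
  unfolding ww_def Complex.DeMoivre by simp
lemma vv3: "vv^3 = -1"
  unfolding vv_def Complex.DeMoivre by (simp add: complex_eq_iff)
lemma norm_ww: "norm ww = 1" by (simp add: ww_def)
lemma norm_vv: "norm vv = 1" by (simp add: vv_def)

lemma Re_phi_ray:
  assumes "r \<ge> 0" "u^3 = -1" "norm u = 1"
  shows "Re (phz s (of_real r * u)) \<le> - (r^3)/3 + r * norm s"
proof -
  have "(of_real r * u)^3 = - of_real (r^3)" using assms by (simp add: power_mult_distrib)
  hence "Re (phz s (of_real r * u)) = - (r^3)/3 - r * Re (u * s)"
    by (simp add: phz_def algebra_simps)
  moreover have "- Re (u * s) \<le> norm s"
    using abs_Re_le_cmod[of "u * s"] assms by (simp add: norm_mult)
  then have "r * (- Re (u * s)) \<le> r * norm s" using assms(1) by (rule mult_left_mono)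
  ultimately show ?thesis by (simp add: algebra_simps)
qed

lemma poly_aux:
  fixes r c :: real assumes "r \<ge> 0" "c \<ge> 1"
  shows "r * c - (r^3)/3 \<le> 2 * c^2"
proof (cases "r \<le> 2*c")
  case True
  then have "r*c \<le> 2*c*c" using assms by (intro mult_right_mono) auto
  moreover have "r^3 \<ge> 0" using assms by simp
  ultimately show ?thesis using assms unfolding power2_eq_square by linarith
next
  case False
  then have "r*r \<ge> (2*c)*(2*c)" using assms
    by (intro mult_mono) auto
  moreover have "(2*c)*(2*c) \<ge> 3*c" using assms by (simp add: algebra_simps)
  ultimately have "r*r \<ge> 3*c" by linarith
  then have "r*(r*r) \<ge> r*(3*c)" using assms by (intro mult_left_mono) auto
  then have "3*(r*c) \<le> r*r*r" by (simp add: algebra_simps)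
  moreover have "c*c \<ge> 0" by simp
  ultimately show ?thesis unfolding power3_eq_cube power2_eq_square by linarith
qed

lemma norm_gg:
  assumes "r \<ge> 0"
  shows "norm (gg s r) \<le> 2 * exp (2*(norm s + 1)^2) * exp (-r)"
proof -
  have e: "exp (Re (phz s (of_real r * u))) \<le> exp (2*(norm s + 1)^2) * exp (-r)"
    if "u^3 = -1" "norm u = 1" for u
  proof -
    have "Re (phz s (of_real r * u)) \<le> - (r^3)/3 + r * norm s" by (rule Re_phi_ray) (use assms that in auto)
    also have "\<dots> \<le> 2*(norm s + 1)^2 - r"
      using poly_aux[of r "norm s + 1"] assms by (simp add: algebra_simps)
    finally show ?thesis by (simp flip: exp_add)
  qed
  have "norm (gg s r) \<le> norm (ww * exp (phz s (of_real r * ww))) + norm (vv * exp (phz s (of_real r * vv)))"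
    unfolding gg_def by (rule norm_triangle_ineq4)
  also have "\<dots> = exp (Re (phz s (of_real r * ww))) + exp (Re (phz s (of_real r * vv)))"
    by (simp add: norm_mult norm_ww norm_vv norm_exp_eq_Re)
  also have "\<dots> \<le> 2 * exp (2*(norm s + 1)^2) * exp (-r)"
    using e[OF ww3 norm_ww] e[OF vv3 norm_vv] by simp
  finally show ?thesis .
qed

lemma cont_gg: "continuous_on S (gg s)"
  unfolding gg_def phz_def by (intro continuous_intros) auto

lemma gg_meas: "gg s \<in> borel_measurable (lebesgue_on {c..})"
  by (rule continuous_imp_measurable_on_sets_lebesgue[OF cont_gg]) auto

lemma exp_int: "((\<lambda>x::real. K * exp (-x)) has_integral K * exp (-c)) {c..}"
  using has_integral_mult_right[OF has_integral_exp_minus_to_infinity[of 1 c]] by simp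

lemma gg_integrable:
  assumes "c \<ge> 0" shows "gg s integrable_on {c..}"
  by (rule measurable_bounded_by_integrable_imp_integrable[OF gg_meas _ norm_gg])
     (use has_integral_integrable[OF exp_int[of 1]] assms in auto)

lemma tail_bound:
  assumes "c \<ge> 0" shows "norm (integral {c..} (gg s)) \<le> 2 * exp (2*(norm s + 1)^2) * exp (-c)"
  by (rule integral_norm_bound_integral'[OF norm_gg gg_meas _ exp_int]) (use assms in auto)

lemma Fc_split:
  assumes "c \<ge> 0" shows "Fc s = integral {0..c} (gg s) + integral {c..} (gg s)"
proof -
  have "(gg s has_integral (integral {0..c} (gg s) + integral {c..} (gg s))) ({0..c} \<union> {c..})"
    by (rule has_integral_Un)
      (auto intro!: integrable_integral integrable_continuous_interval cont_gg gg_integrable assms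
        simp: negligible_sing max_def)
  moreover have "{0..c} \<union> {c..} = {0::real..}" using assms by auto
  ultimately show ?thesis unfolding Fc_def by (metis integral_unique)
qed



definition gd :: "complex \<Rightarrow> real \<Rightarrow> complex" where
  "gd s r = ww * exp (phz s (of_real r * ww)) * (- (of_real r * ww)) - vv * exp (phz s (of_real r * vv)) * (- (of_real r * vv))"

lemma gg_deriv: "((\<lambda>s. gg s r) has_field_derivative gd s r) (at s within U)"
  unfolding gg_def gd_def phz_def
  by (auto intro!: derivative_eq_intros)

lemma Fn_holo: "(\<lambda>s. integral {0..c} (gg s)) holomorphic_on UNIV"
proof -
  have "(\<lambda>s. integral (cbox 0 c) (gg s)) holomorphic_on UNIV"
  proof (rule leibniz_rule_holomorphic)
    show "continuous_on (UNIV \<times> cbox 0 c) (\<lambda>(x, t). gd x t)"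
      unfolding gd_def phz_def case_prod_unfold by (intro continuous_intros) auto
  qed (auto intro: gg_deriv integrable_continuous_interval cont_gg)
  then show ?thesis by simp
qed

lemma Fc_holo_ball: "Fc holomorphic_on ball z 1"
proof -
  define K where "K = 2 * exp (2*(norm z + 2)^2)"
  have ul: "uniform_limit (cball z 1) (\<lambda>n s. integral {0..real n} (gg s)) Fc sequentially"
  proof (rule uniform_limitI)
    fix e :: real assume e: "e > 0"
    have "(\<lambda>n. K * exp (- real n)) \<longlonglongrightarrow> 0" by real_asymp
    then have "\<forall>\<^sub>F n in sequentially. K * exp (- real n) < e"
      using e by (simp add: order_tendsto_iff)
    then show "\<forall>\<^sub>F n in sequentially. \<forall>s\<in>cball z 1. dist (integral {0..real n} (gg s)) (Fc s) < e"
    proof eventually_elim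
      case (elim n)
      show ?case
      proof
        fix s assume s: "s \<in> cball z 1"
        have "norm s \<le> norm z + 1" using s norm_triangle_sub[of s z]
          by (auto simp: dist_norm norm_minus_commute)
        then have "exp (2*(norm s + 1)^2) \<le> exp (2*(norm z + 2)^2)"
          by (simp add: power_mono)
        have "dist (integral {0..real n} (gg s)) (Fc s) = norm (integral {real n..} (gg s))"
          using Fc_split[of "real n" s] by (simp add: dist_norm norm_minus_commute)
        also have "\<dots> \<le> 2 * exp (2*(norm s + 1)^2) * exp (- real n)"
          by (rule tail_bound) simp
        also have "\<dots> \<le> K * exp (- real n)"
          unfolding K_def using \<open>exp (2*(norm s + 1)^2) \<le> _\<close> by simp
        finally show "dist (integral {0..real n} (gg s)) (Fc s) < e" using elim by simp
      qed
    qed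
  qed
  show ?thesis
    by (rule holomorphic_uniform_limit[OF _ ul])
       (auto intro!: always_eventually holomorphic_on_subset[OF Fn_holo]
          holomorphic_on_imp_continuous_on)
qed

lemma Fc_holo: "Fc holomorphic_on UNIV"
proof -
  have "Fc field_differentiable (at z)" for z
    using Fc_holo_ball[of z] by (rule holomorphic_on_imp_differentiable_at) auto
  then show ?thesis
    by (simp add: holomorphic_on_def field_differentiable_at_within)
qed



lemma Re_cube: "Re (z^3) = Re z ^ 3 - 3 * Re z * Im z ^ 2"
  by (simp add: power3_eq_cube power2_eq_square algebra_simps)

lemma Re_phz: "Re (phz s z) = (Re z ^ 3 - 3 * Re z * Im z ^ 2)/3 - (Re z * Re s - Im z * Im s)"
  by (simp add: phz_def Re_cube Re_divide_numeral)

lemma horiz_Re: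
  fixes p h c \<sigma> :: real
  assumes "\<sigma> \<le> p" "p \<le> c/2" "h^2 = 3*c^2/4" "\<bar>h\<bar> \<le> c" "0 \<le> \<sigma>"
  shows "Re (phz s (Complex p h)) \<le> -(2/3)*\<sigma>*c^2 + 2 * norm s * c"
proof -
  have p0: "p \<ge> 0" using assms by linarith
  have "p^2 \<le> (c/2)^2" using assms p0 by (intro power_mono) auto
  then have "p * p^2 \<le> p * (c/2)^2" using p0 by (intro mult_left_mono) auto
  then have A: "p^3 \<le> p * c^2/4" by (simp add: power3_eq_cube power2_eq_square algebra_simps)
  have "- Re s \<le> norm s" using abs_Re_le_cmod[of s] by linarith
  then have "p * (- Re s) \<le> p * norm s" using p0 by (rule mult_left_mono)
  then have B: "- (p * Re s) \<le> p * norm s" by simp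
  have F: "p*h^2 = 3*(p*c^2)/4" using assms(3) by simp
  have G: "Re (phz s (Complex p h)) = p^3/3 - p*h^2 - p*Re s + h*Im s"
    by (simp add: Re_phz field_simps)
  have C: "h * Im s \<le> c * norm s" using abs_Im_le_cmod[of s] assms
    by (smt (verit) abs_mult abs_le_iff mult_mono norm_ge_zero)
  have D: "p * norm s \<le> c * norm s" using assms p0
    by (intro mult_right_mono) auto
  have E: "\<sigma> * c^2 \<le> p * c^2" using assms by (intro mult_right_mono) auto
  have "p^3/3 - p*h^2 - p*Re s + h*Im s \<le> -(2/3)*(\<sigma>*c^2) + 2*(c*norm s)"
    using A B C D E F by linarith
  also have "-(2/3)*(\<sigma>*c^2) + 2*(c*norm s) = -(2/3)*\<sigma>*c^2 + 2 * norm s * c" by simp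
  finally show ?thesis unfolding G .
qed

lemma vert_Re:
  fixes \<sigma> u :: real
  assumes "\<sigma> \<ge> 1"
  shows "Re (phz s (Complex \<sigma> u)) \<le> (\<sigma>^3/3 - \<sigma> * Re s + (Im s)^2/(2*\<sigma>)) - u^2/2"
proof -
  have sq: "(\<sigma> * u - Im s)^2 / (2*\<sigma>) \<ge> 0" using assms by simp
  have e: "(\<sigma> * u - Im s)^2 / (2*\<sigma>) = \<sigma> * u^2 / 2 - u * Im s + (Im s)^2/(2*\<sigma>)"
    using assms by (simp add: field_simps power2_eq_square)
  have f: "(\<sigma> - 1) * u^2 \<ge> 0" using assms by simp
  have g: "u * Im s \<le> \<sigma> * u^2/2 + (Im s)^2/(2*\<sigma>)" using sq e by linarith
  have h: "Re (phz s (Complex \<sigma> u)) = \<sigma>^3/3 - \<sigma>*u^2 - \<sigma> * Re s + u * Im s"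
    by (simp add: Re_phz field_simps)
  show ?thesis unfolding h using g f by (simp add: algebra_simps)
qed



lemma ww_eq: "ww = Complex (1/2) (sqrt 3/2)"
  by (simp add: ww_def complex_eq_iff cos_60 sin_60)
lemma vv_eq: "vv = Complex (1/2) (-(sqrt 3/2))"
  by (simp add: vv_def complex_eq_iff cos_60 sin_60)

lemma ray_deriv:
  assumes G: "\<And>z. (G has_field_derivative f z) (at z)"
  shows "((\<lambda>r. G (of_real r * u)) has_vector_derivative u * f (of_real r * u)) (at r within A)"
proof -
  have a: "((\<lambda>r::real. of_real r * u) has_vector_derivative u) (at r)"
    by (rule has_vector_derivative_real_field) (auto intro!: derivative_eq_intros)
  show ?thesis
    using field_vector_diff_chain_at[OF a G] by (auto simp: o_def intro: has_vector_derivative_at_within)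
qed

lemma vert_deriv:
  assumes G: "\<And>z. (G has_field_derivative f z) (at z)"
  shows "((\<lambda>u. G (of_real \<sigma> + \<i> * of_real u)) has_vector_derivative \<i> * f (of_real \<sigma> + \<i> * of_real u)) (at u within A)"
proof -
  have a: "((\<lambda>u::real. of_real \<sigma> + \<i> * of_real u) has_vector_derivative \<i>) (at u)"
    by (rule has_vector_derivative_real_field) (auto intro!: derivative_eq_intros)
  show ?thesis
    using field_vector_diff_chain_at[OF a G] by (auto simp: o_def intro: has_vector_derivative_at_within)
qed

lemma Fc_bound:
  assumes sig: "\<sigma> \<ge> 1"
  shows "norm (Fc s) \<le> 2*pi*exp (\<sigma>^3/3 - \<sigma> * Re s + (Im s)^2/(2*\<sigma>))"
proof -
  define M where "M = \<sigma>^3/3 - \<sigma> * Re s + (Im s)^2/(2*\<sigma>)"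
  define f where "f = (\<lambda>z. exp (phz s z))"
  have "f holomorphic_on UNIV" unfolding f_def phz_def by (intro holomorphic_intros) auto
  then obtain G where G0: "\<And>z. z \<in> UNIV \<Longrightarrow> (G has_field_derivative f z) (at z within UNIV)"
    using holomorphic_convex_primitive'[of UNIV f] by auto
  have G: "\<And>z. (G has_field_derivative f z) (at z)" using G0 by simp
  have ray: "integral {0..c} (gg s) = G (of_real c * ww) - G (of_real c * vv)" if "c \<ge> 0" for c
  proof -
    have "((\<lambda>r. ww * f (of_real r * ww) - vv * f (of_real r * vv)) has_integral
         ((G (of_real c * ww) - G (of_real c * vv)) - (G (of_real 0 * ww) - G (of_real 0 * vv)))) {0..c}"
      by (rule fundamental_theorem_of_calculus)
         (use that in \<open>auto intro!: derivative_eq_intros ray_deriv[OF G]\<close>)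
    moreover have "(\<lambda>r. ww * f (of_real r * ww) - vv * f (of_real r * vv)) = gg s"
      by (auto simp: gg_def f_def fun_eq_iff)
    ultimately show ?thesis by (simp add: integral_unique)
  qed
  have vert: "norm (G (of_real \<sigma> + \<i> * of_real h) - G (of_real \<sigma> + \<i> * of_real (-h))) \<le> 2*pi*exp M"
    if "h \<ge> 0" for h
  proof -
    have I1: "((\<lambda>u. \<i> * f (of_real \<sigma> + \<i> * of_real u)) has_integral
        (G (of_real \<sigma> + \<i> * of_real h) - G (of_real \<sigma> + \<i> * of_real (-h)))) {-h..h}"
      by (rule fundamental_theorem_of_calculus) (use that vert_deriv[OF G] in auto)
    have I2: "((\<lambda>u. 2*exp M * inverse (1 + u^2)) has_integral
        (2*exp M * arctan h - 2*exp M * arctan (-h))) {-h..h}"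
      by (rule fundamental_theorem_of_calculus)
         (use that in \<open>auto intro!: derivative_eq_intros simp: has_real_derivative_iff_has_vector_derivative[symmetric]\<close>)
    have bd: "norm (\<i> * f (of_real \<sigma> + \<i> * of_real u)) \<le> 2*exp M * inverse (1 + u^2)" for u
    proof -
      have eq: "of_real \<sigma> + \<i> * of_real u = Complex \<sigma> u" by (simp add: complex_eq_iff)
      have "norm (\<i> * f (of_real \<sigma> + \<i> * of_real u)) = exp (Re (phz s (Complex \<sigma> u)))"
        by (simp add: f_def eq norm_mult norm_exp_eq_Re)
      also have "\<dots> \<le> exp (M - u^2/2)" using vert_Re[OF sig, of s u] by (simp add: M_def)
      also have "\<dots> = exp M / exp (u^2/2)" by (simp add: exp_diff)
      also have "\<dots> \<le> exp M / ((1 + u^2)/2)"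
      proof (rule divide_left_mono)
        show "(1 + u^2)/2 \<le> exp (u^2/2)" using exp_ge_add_one_self[of "u^2/2"] add_divide_distrib[of 1 "u^2" 2] by linarith
        show "0 < exp (u^2/2) * ((1 + u^2)/2)" by (intro mult_pos_pos) (auto intro: add_pos_nonneg)
      qed simp
      also have "\<dots> = 2*exp M * inverse (1 + u^2)" by (simp add: field_simps)
      finally show ?thesis .
    qed
    have "norm (G (of_real \<sigma> + \<i> * of_real h) - G (of_real \<sigma> + \<i> * of_real (-h)))
          \<le> 2*exp M * arctan h - 2*exp M * arctan (-h)"
      using integral_norm_bound_integral[OF has_integral_integrable[OF I1] has_integral_integrable[OF I2] bd]
      unfolding integral_unique[OF I1] integral_unique[OF I2] .
    also have "\<dots> = 2*exp M * (arctan h + arctan h)" by (simp add: algebra_simps arctan_minus)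
    also have "\<dots> \<le> 2*exp M * pi" using arctan_ubound[of h] by (intro mult_left_mono) auto
    finally show ?thesis by (simp add: mult_ac)
  qed
  have horiz: "norm (G (Complex (c/2) h') - G (Complex \<sigma> h')) \<le> exp (-(2/3)*\<sigma>*c^2 + 2*norm s*c) * c"
    if c: "2*\<sigma> \<le> c" and h': "h'^2 = 3*c^2/4" "\<bar>h'\<bar> \<le> c" for c h'
  proof -
    let ?S = "closed_segment (Complex (c/2) h') (Complex \<sigma> h')"
    have "norm (G (Complex (c/2) h') - G (Complex \<sigma> h')) \<le>
          exp (-(2/3)*\<sigma>*c^2 + 2*norm s*c) * norm (Complex (c/2) h' - Complex \<sigma> h')"
    proof (rule field_differentiable_bound[of ?S])
      show "(G has_field_derivative f z) (at z within ?S)" for z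
        using G by (rule has_field_derivative_at_within)
      show "norm (f z) \<le> exp (-(2/3)*\<sigma>*c^2 + 2*norm s*c)" if z: "z \<in> ?S" for z
      proof -
        obtain u where u: "0 \<le> u" "u \<le> 1" "z = (1 - u) *\<^sub>R Complex (c/2) h' + u *\<^sub>R Complex \<sigma> h'"
          using z in_segment(1) by blast
        have rz: "Re z = c/2 - u*(c/2) + u*\<sigma>" and iz: "Im z = h'" unfolding u(3) by (simp_all add: field_simps)
        have "u*\<sigma> \<le> u*(c/2)" using u c by (intro mult_left_mono) auto
        moreover have "(1-u)*\<sigma> \<le> (1-u)*(c/2)" using u c by (intro mult_left_mono) auto
        then have "\<sigma> - u*\<sigma> \<le> c/2 - u*(c/2)" by (simp add: algebra_simps)
        ultimately have r1: "\<sigma> \<le> Re z" "Re z \<le> c/2" unfolding rz by linarith+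
        have zc: "z = Complex (Re z) (Im z)" by simp
        have "norm (f z) = exp (Re (phz s (Complex (Re z) h')))"
          by (subst zc) (simp add: f_def norm_exp_eq_Re iz)
        also have "\<dots> \<le> exp (-(2/3)*\<sigma>*c^2 + 2*norm s*c)"
          using horiz_Re[OF r1 h'] sig by simp
        finally show ?thesis .
      qed
    qed (auto simp: ends_in_segment)
    also have "norm (Complex (c/2) h' - Complex \<sigma> h') \<le> c"
    proof -
      have "Complex (c/2) h' - Complex \<sigma> h' = of_real (c/2 - \<sigma>)" by (simp add: complex_eq_iff)
      moreover have "norm (of_real (c/2 - \<sigma>) :: complex) \<le> c" using c sig by (simp only: norm_of_real)
      ultimately show ?thesis by metis
    qed
    finally show ?thesis by (simp add: mult_left_mono)
  qed
  define K where "K = 2 * exp (2*(norm s + 1)^2)"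
  have main: "norm (Fc s) \<le> 2*pi*exp M + 2*(exp (-(2/3)*\<sigma>*c^2 + 2*norm s*c) * c) + K * exp (-c)"
    if c: "2*\<sigma> \<le> c" for c
  proof -
    define h where "h = c * (sqrt 3/2)"
    have c0: "c \<ge> 0" using c sig by simp
    have h0: "h \<ge> 0" using c0 by (simp add: h_def)
    have hsq: "h^2 = 3*c^2/4" "(-h)^2 = 3*c^2/4" by (simp_all add: h_def power_mult_distrib power_divide)
    have "sqrt 3 \<le> 2" by (rule real_le_lsqrt) auto
    then have hc: "\<bar>h\<bar> \<le> c" "\<bar>-h\<bar> \<le> c" using c0 h0 by (auto simp: h_def intro: mult_left_mono)
    have e1: "of_real c * ww = Complex (c/2) h" by (simp add: ww_eq h_def complex_eq_iff)
    have e2: "of_real c * vv = Complex (c/2) (-h)" by (simp add: vv_eq h_def complex_eq_iff)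
    have e3: "of_real \<sigma> + \<i> * of_real h = Complex \<sigma> h" "of_real \<sigma> + \<i> * of_real (-h) = Complex \<sigma> (-h)"
      by (simp_all add: complex_eq_iff)
    have "Fc s = (G (Complex (c/2) h) - G (Complex \<sigma> h)) + (G (Complex \<sigma> h) - G (Complex \<sigma> (-h)))
              - (G (Complex (c/2) (-h)) - G (Complex \<sigma> (-h))) + integral {c..} (gg s)"
      using Fc_split[OF c0, of s] ray[OF c0] e1 e2 by simp
    also have "norm \<dots> \<le> norm (G (Complex (c/2) h) - G (Complex \<sigma> h)) + norm (G (Complex \<sigma> h) - G (Complex \<sigma> (-h)))
              + norm (G (Complex (c/2) (-h)) - G (Complex \<sigma> (-h))) + norm (integral {c..} (gg s))"
      by (intro order.trans[OF norm_triangle_ineq] add_mono order.trans[OF norm_triangle_ineq4] order_refl)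
    also have "\<dots> \<le> exp (-(2/3)*\<sigma>*c^2 + 2*norm s*c) * c + 2*pi*exp M + exp (-(2/3)*\<sigma>*c^2 + 2*norm s*c) * c + K * exp (-c)"
      using horiz[OF c hsq(1) hc(1)] horiz[OF c hsq(2) hc(2)] vert[OF h0] e3 tail_bound[OF c0, of s]
      unfolding K_def by (intro add_mono) auto
    finally show ?thesis by (simp add: algebra_simps)
  qed
  have lim: "((\<lambda>c. 2*pi*exp M + 2*(exp (-(2/3)*\<sigma>*c^2 + 2*norm s*c) * c) + K * exp (-c)) \<longlongrightarrow> 2*pi*exp M + 2*0 + K*0) at_top"
  proof (intro tendsto_intros)
    show "((\<lambda>c. exp (-(2/3)*\<sigma>*c^2 + 2*norm s*c) * c) \<longlongrightarrow> 0) at_top"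
      using sig by real_asymp
    show "((\<lambda>c::real. exp (-c)) \<longlongrightarrow> 0) at_top" by real_asymp
  qed
  have ev: "\<forall>\<^sub>F c in at_top. norm (Fc s) \<le> 2*pi*exp M + 2*(exp (-(2/3)*\<sigma>*c^2 + 2*norm s*c) * c) + K * exp (-c)"
    using eventually_ge_at_top[of "2*\<sigma>"] by eventually_elim (rule main)
  have "norm (Fc s) \<le> 2*pi*exp M + 2*0 + K*0"
    by (rule tendsto_le[OF trivial_limit_at_top_linorder lim tendsto_const ev])
  then show ?thesis by (simp add: M_def)
qed



lemma poly_final:
  fixes R b e :: real
  assumes "0 \<le> R" "0 < e" "0 \<le> b"
  shows "b*(R^2+R+1) \<le> e*R^3 + (2*b + 8*b^3/e^2)"
proof -
  have "0 \<le> (R-1)^2" by simp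
  then have "0 \<le> R^2 - 2*R + 1" by (simp add: power2_diff)
  then have "R \<le> R^2 + 1" using assms by linarith
  then have "b*R \<le> b*(R^2+1)" using assms by (intro mult_left_mono) auto
  then have 1: "b*(R^2+R+1) \<le> 2*b*R^2 + 2*b" by (simp add: algebra_simps)
  have 2: "2*b*R^2 \<le> e*R^3 + 8*b^3/e^2"
  proof (cases "R \<le> 2*b/e")
    case True
    then have "R^2 \<le> (2*b/e)^2" using assms by (intro power_mono) auto
    then have "2*b*R^2 \<le> 2*b*(2*b/e)^2" using assms by (intro mult_left_mono) auto
    also have "\<dots> = 8*b^3/e^2" by (simp add: power2_eq_square power3_eq_cube field_simps)
    moreover have "e*R^3 \<ge> 0" using assms by simp
    ultimately show ?thesis by linarith
  next
    case False
    then have "2*b \<le> e*R" using assms by (simp add: field_simps)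
    then have "2*b*R^2 \<le> e*R*R^2" using assms by (intro mult_right_mono) auto
    moreover have "8*b^3/e^2 \<ge> 0" using assms by simp
    ultimately show ?thesis by (simp add: power2_eq_square power3_eq_cube mult_ac)
  qed
  show ?thesis using 1 2 by simp
qed

lemma E_bound:
  fixes R Y A Res Ims2 :: real
  assumes "0 \<le> R" "0 \<le> Y" "1 \<le> A" "Res \<ge> R^2 - 2*R - A" "Ims2 \<le> 4*(R+1)^2"
  shows "2*(R+1)*Y*R + (R+1)^3/3 - (R+1)*Res + Ims2/(2*(R+1)) \<le> -(2/3)*R^3 + (2*Y+8+A)*(R^2+R+1)"
proof -
  have a: "(R+1)*Res \<ge> (R+1)*(R^2 - 2*R - A)" using assms by (intro mult_left_mono) auto
  have b: "Ims2/(2*(R+1)) \<le> 4*(R+1)^2/(2*(R+1))" using assms by (intro divide_right_mono) auto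
  have c: "4*(R+1)^2/(2*(R+1)) = 2*(R+1)" using assms by (simp add: power2_eq_square field_simps)
  have d: "2*(R+1)*Y*R + (R+1)^3/3 - (R+1)*(R^2 - 2*R - A) + 2*(R+1) \<le> -(2/3)*R^3 + (2*Y+8+A)*(R^2+R+1)"
  proof -
    have "-(2/3)*R^3 + (2*Y+8+A)*(R^2+R+1) - (2*(R+1)*Y*R + (R+1)^3/3 - (R+1)*(R^2 - 2*R - A) + 2*(R+1))
          = (6+A)*R^2 + 3*R + 17/3 + 2*Y"
      by (simp add: power2_eq_square power3_eq_cube field_simps)
    moreover have "(6+A)*R^2 + 3*R + 17/3 + 2*Y \<ge> 0" using assms by simp
    ultimately show ?thesis by linarith
  qed
  show ?thesis using a b c d by linarith
qed



definition HH :: "real \<Rightarrow> real \<Rightarrow> real \<Rightarrow> complex \<Rightarrow> complex" where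
  "HH a y z t = 2 * exp (2 * t * of_real y * of_real z) * Fc (t^2 + of_real (y^2 + z^2 + a/4)) / (2 * pi * \<i>)"

lemma HH_holo: "HH a y z holomorphic_on UNIV"
proof -
  have p: "(\<lambda>t. t^2 + of_real (y^2 + z^2 + a/4)) holomorphic_on UNIV"
    by (intro holomorphic_intros)
  have "(\<lambda>t. Fc (t^2 + of_real (y^2 + z^2 + a/4))) holomorphic_on UNIV"
    using holomorphic_on_compose[OF p holomorphic_on_subset[OF Fc_holo]] by (simp add: o_def)
  then show ?thesis unfolding HH_def by (intro holomorphic_intros) auto
qed

lemma Re_ofr_mult: "Re (of_real r * w) = r * Re w" by simp

lemma Kker_eq: "Kker a t y z = Re (HH a y z (of_real t))"
proof -
  have "HH a y z (of_real t) = of_real (2 * exp (2*t*y*z)) * (Fc (of_real (t^2 + y^2 + z^2 + a/4)) / (2 * pi * \<i>))"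
    unfolding HH_def by (simp add: exp_of_real[symmetric] add.assoc)
  moreover have "Ai (t^2 + y^2 + z^2 + a/4) = Re (Fc (of_real (t^2 + y^2 + z^2 + a/4)) / (2 * pi * \<i>))"
    unfolding Ai_def Fc_def Airy_eq ..
  ultimately show ?thesis
    unfolding Kker_def by (simp only: Re_ofr_mult)
qed

lemma deriv_Re:
  assumes "H holomorphic_on UNIV"
  shows "(deriv ^^ n) (\<lambda>t. Re (H (of_real t))) = (\<lambda>t. Re ((deriv ^^ n) H (of_real t)))"
proof (induction n)
  case 0 then show ?case by simp
next
  case (Suc n)
  have hn: "(deriv ^^ n) H holomorphic_on UNIV" by (rule holomorphic_higher_deriv[OF assms]) auto
  have "((\<lambda>t. Re ((deriv ^^ n) H (of_real t))) has_real_derivative Re (deriv ((deriv ^^ n) H) (of_real t))) (at t)" for t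
    by (intro has_field_derivative_Re has_vector_derivative_real_field holomorphic_derivI[OF hn]) auto
  then have "deriv (\<lambda>t. Re ((deriv ^^ n) H (of_real t))) t = Re (deriv ((deriv ^^ n) H) (of_real t))" for t
    by (rule DERIV_imp_deriv)
  note d = this
  have "(deriv ^^ Suc n) (\<lambda>t. Re (H (of_real t))) = deriv ((deriv ^^ n) (\<lambda>t. Re (H (of_real t))))" by simp
  also have "\<dots> = deriv (\<lambda>t. Re ((deriv ^^ n) H (of_real t)))" by (simp only: Suc.IH)
  also have "\<dots> = (\<lambda>t. Re (deriv ((deriv ^^ n) H) (of_real t)))" using d by (simp add: fun_eq_iff)
  also have "\<dots> = (\<lambda>t. Re ((deriv ^^ Suc n) H (of_real t)))" by simp
  finally show ?case .
qed



lemma HH_bound: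
  fixes x y z a :: real and t :: complex
  assumes t: "norm (of_real x - t) = 1"
  defines "R \<equiv> sqrt (x^2 + z^2)"
  shows "norm (HH a y z t) \<le> 2 * exp (-(2/3)*R^3 + (2*\<bar>y\<bar>+8+(1+\<bar>a\<bar>/4))*(R^2+R+1))"
proof -
  define s where "s = t^2 + of_real (y^2 + z^2 + a/4)"
  define p where "p = Re t"
  define q where "q = Im t"
  define A where "A = 1 + \<bar>a\<bar>/4"
  have R0: "R \<ge> 0" and R2: "R^2 = x^2 + z^2" unfolding R_def by simp_all
  have "sqrt (x^2) \<le> R" unfolding R_def by (intro real_sqrt_le_mono) simp
  then have xR: "\<bar>x\<bar> \<le> R" by simp
  have "sqrt (z^2) \<le> R" unfolding R_def by (intro real_sqrt_le_mono) simp
  then have zR: "\<bar>z\<bar> \<le> R" by simp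
  have "(norm (of_real x - t))^2 = 1" using t by simp
  then have pq: "(x - p)^2 + q^2 = 1" unfolding p_def q_def by (simp add: cmod_power2)
  have q1: "q^2 \<le> 1" using pq zero_le_power2[of "x-p"] by linarith
  have "(x-p)^2 \<le> 1" using pq zero_le_power2[of q] by linarith
  then have d1: "\<bar>x - p\<bar> \<le> 1" using abs_le_square_iff[of "x-p" 1] by simp
  have pR: "\<bar>p\<bar> \<le> R + 1" using d1 xR by linarith
  have Res: "Re s = p^2 - q^2 + y^2 + z^2 + a/4" unfolding s_def p_def q_def by (simp add: power2_eq_square)
  have Ims: "Im s = 2*p*q" unfolding s_def p_def q_def by (simp add: power2_eq_square)
  have "\<bar>x*(p-x)\<bar> \<le> \<bar>x\<bar>" using d1 by (simp add: abs_mult mult_left_le)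
  then have "p^2 \<ge> x^2 - 2*\<bar>x\<bar>"
  proof -
    have "p^2 = x^2 + 2*(x*(p-x)) + (p-x)^2" by (simp add: power2_eq_square algebra_simps)
    moreover have "(p-x)^2 \<ge> 0" by simp
    ultimately show ?thesis using \<open>\<bar>x*(p-x)\<bar> \<le> \<bar>x\<bar>\<close> by linarith
  qed
  then have ReB: "Re s \<ge> R^2 - 2*R - A"
  proof -
    have "y^2 \<ge> 0" "a/4 \<ge> -(\<bar>a\<bar>/4)" by auto
    then show ?thesis unfolding Res A_def R2 using q1 xR \<open>p^2 \<ge> x^2 - 2*\<bar>x\<bar>\<close> by linarith
  qed
  have "(Im s)^2 = 4*p^2*q^2" unfolding Ims by (simp add: power2_eq_square)
  also have "\<dots> \<le> 4*p^2*1" using q1 by (intro mult_left_mono) auto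
  also have "\<dots> \<le> 4*(R+1)^2" using pR R0 abs_le_square_iff[of p "R+1"] by simp
  finally have ImB: "(Im s)^2 \<le> 4*(R+1)^2" .
  have "\<bar>p\<bar> * \<bar>y\<bar> * \<bar>z\<bar> \<le> (R+1) * \<bar>y\<bar> * R"
    using pR zR R0 by (intro mult_mono) auto
  then have expB: "Re (2 * t * of_real y * of_real z) \<le> 2*(R+1)*\<bar>y\<bar>*R"
  proof -
    have "Re (2 * t * of_real y * of_real z) = 2*(p*y*z)" by (simp add: p_def)
    moreover have "p*y*z \<le> \<bar>p\<bar> * \<bar>y\<bar> * \<bar>z\<bar>" by (simp add: abs_mult[symmetric])
    moreover have "2*(R+1)*\<bar>y\<bar>*R = 2*((R+1)*\<bar>y\<bar>*R)" by simp
    ultimately show ?thesis using \<open>\<bar>p\<bar> * \<bar>y\<bar> * \<bar>z\<bar> \<le> (R+1) * \<bar>y\<bar> * R\<close> by linarith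
  qed
  have FB: "norm (Fc s) \<le> 2*pi*exp ((R+1)^3/3 - (R+1) * Re s + (Im s)^2/(2*(R+1)))"
    by (rule Fc_bound) (use R0 in simp)
  have "norm (HH a y z t) = 2 * exp (Re (2 * t * of_real y * of_real z)) * norm (Fc s) / (2*pi)"
    unfolding HH_def s_def by (simp add: norm_mult norm_divide norm_exp_eq_Re)
  also have "\<dots> \<le> 2 * exp (2*(R+1)*\<bar>y\<bar>*R) * (2*pi*exp ((R+1)^3/3 - (R+1) * Re s + (Im s)^2/(2*(R+1)))) / (2*pi)"
    using expB FB by (intro divide_right_mono mult_mono) auto
  also have "\<dots> = 2 * exp (2*(R+1)*\<bar>y\<bar>*R + (R+1)^3/3 - (R+1) * Re s + (Im s)^2/(2*(R+1)))"
    by (simp add: exp_add exp_diff)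
  also have "\<dots> \<le> 2 * exp (-(2/3)*R^3 + (2*\<bar>y\<bar>+8+A)*(R^2+R+1))"
    using E_bound[OF R0 abs_ge_zero _ ReB ImB, of y] unfolding A_def by simp
  finally show ?thesis unfolding A_def .
qed



lemma sqrt_cube_powr:
  fixes X :: real assumes "X \<ge> 0" shows "sqrt X ^ 3 = X powr (3/2)"
proof (cases "X = 0")
  case True then show ?thesis by simp
next
  case False
  then have X: "X > 0" using assms by simp
  have "sqrt X ^ 3 = (X powr (1/2)) ^ 3" using X by (simp add: powr_half_sqrt)
  also have "\<dots> = (X powr (1/2)) powr (real 3)" using X by (subst powr_realpow) auto
  also have "\<dots> = X powr (3/2)" by (simp add: powr_powr)
  finally show ?thesis .
qed

theorem lemma2:
  fixes a y \<rho> :: real and n :: nat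
  assumes "0 < \<rho>" and "\<rho> < 1"
  shows "\<exists>C>0. \<forall>x z :: real.
           \<bar>(deriv ^^ n) (\<lambda>t. Kker a t y z) x\<bar>
             < C * exp (- (2 * \<rho> / 3) * (x^2 + z^2) powr (3/2))"
proof -
  define b where "b = 2*\<bar>y\<bar>+8+(1+\<bar>a\<bar>/4)"
  define e where "e = 2*(1-\<rho>)/3"
  define Kc where "Kc = 2*b + 8*b^3/e^2"
  define C where "C = fact n * (2*exp Kc) + 1"
  have b0: "b \<ge> 0" unfolding b_def by simp
  have e0: "e > 0" unfolding e_def using assms by simp
  have C0: "C > 0" unfolding C_def by (simp add: add_pos_nonneg)
  have "\<bar>(deriv ^^ n) (\<lambda>t. Kker a t y z) x\<bar> < C * exp (- (2 * \<rho> / 3) * (x^2 + z^2) powr (3/2))" for x z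
  proof -
    define R where "R = sqrt (x^2 + z^2)"
    have R0: "R \<ge> 0" unfolding R_def by simp
    define E where "E = exp (- (2 * \<rho> / 3) * R^3)"
    have E0: "E > 0" unfolding E_def by simp
    have B: "norm (HH a y z t) \<le> 2*exp Kc * E" if "norm (of_real x - t) = 1" for t
    proof -
      have "norm (HH a y z t) \<le> 2 * exp (-(2/3)*R^3 + b*(R^2+R+1))"
        using HH_bound[OF that, of a y z] unfolding R_def b_def by simp
      also have "\<dots> \<le> 2 * exp (-(2/3)*R^3 + (e*R^3 + Kc))"
        using poly_final[OF R0 e0 b0] unfolding Kc_def by simp
      also have "-(2/3)*R^3 + (e*R^3 + Kc) = Kc + (- (2 * \<rho> / 3) * R^3)"
        unfolding e_def by (simp add: field_simps)
      finally show ?thesis unfolding E_def exp_add by (simp only: mult.assoc)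
    qed
    have ci: "norm ((deriv ^^ n) (HH a y z) (of_real x)) \<le> fact n * (2*exp Kc * E) / 1^n"
      by (rule Cauchy_inequality)
         (use HH_holo[of a y z] B in \<open>auto intro: holomorphic_on_subset holomorphic_on_imp_continuous_on\<close>)
    have "(\<lambda>t. Kker a t y z) = (\<lambda>t. Re (HH a y z (of_real t)))" by (simp add: Kker_eq)
    then have "\<bar>(deriv ^^ n) (\<lambda>t. Kker a t y z) x\<bar> = \<bar>Re ((deriv ^^ n) (HH a y z) (of_real x))\<bar>"
      by (simp add: deriv_Re[OF HH_holo])
    also have "\<dots> \<le> norm ((deriv ^^ n) (HH a y z) (of_real x))" by (rule abs_Re_le_cmod)
    also have "\<dots> \<le> fact n * (2*exp Kc) * E" using ci by simp
    also have "\<dots> < C * E" unfolding C_def using E0 by (simp add: distrib_right)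
    also have "E = exp (- (2 * \<rho> / 3) * (x^2 + z^2) powr (3/2))"
      unfolding E_def R_def by (simp add: sqrt_cube_powr)
    finally show ?thesis .
  qed
  then show ?thesis using C0 by blast
qed


end
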